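(* Let $n,k$ be integers with $2\le 2k\le n-4$, let $\lambda\in\overline{\mathcal{U}}_{T_{n,n-2k}}$, and let $Y=\mathrm{KN}(S_\lambda)$ with hook lengths $h_{i,j}$. Then $h_{i,1}=h_{1,i}$ for every $1\le i\le n-2$.
   Context: A partition of $N$ into distinct parts is a sequence $\lambda=(\lambda_1<\dots<\lambda_t)$ of positive integers with sum $N$ and $t\ge 2$, identified with its set of parts. Missing parts: $\mathcal{M}_\lambda=\{1,\dots,\lambda_t\}\setminus\lambda$. $\lambda$ is refinable if two distinct missing parts sum to a part of $\lambda$, unrefinable otherwise; $\mathcal{U}_N$ is the set of unrefinable partitions of $N$. An element of $\mathcal{U}_N$ is maximal if its largest part is the maximum of the largest parts of elements of $\mathcal{U}_N$; $\widetilde{\mathcal{U}}_N$ is the set of these and $\overline{\mathcal{U}}_N=\{\lambda\in\widetilde{\mathcal{U}}_N:\#\mathcal{M}_\lambda=\lfloor\lambda_t/2\rfloor\}$. $T_n=n(n+1)/2$, $T_{n,d}=T_n-d$. For $\lambda\in\overline{\mathcal{U}}_{T_{n,n-2k}}$ with $2\le 2k\le n-4$ one knows $\lambda_t=2n-5$ and $t=n-2$. $S_\lambda=\mathbb{N}_0\setminus\lambda$. The Keith–Nath transformation sends a set $S\subseteq\mathbb{N}_0$ with $0\in S$ and finite complement to the Young diagram $\mathrm{KN}(S)$ whose boundary is the lattice path that, starting at the origin, takes for $j=0,1,\dots,\max(\mathbb{N}_0\setminus S)$ an east step if $j\in S$ and a north step otherwise. Diagrams are in English convention; $h_{i,j}$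 is the hook length of the cell in row $i$ (from the top) and column $j$ (from the left): (cells to its right in its row) + (cells below it in its column) + 1. *)

theory Defs
  imports Main
begin

definition distinct_partition :: "nat \<Rightarrow> nat set \<Rightarrow> bool" where
  "distinct_partition N lam \<longleftrightarrow> finite lam \<and> 0 \<notin> lam \<and> \<Sum>lam = N \<and> card lam \<ge> 2"

definition missing :: "nat set \<Rightarrow> nat set" where
  "missing lam = {1..Max lam} - lam"

definition refinable :: "nat set \<Rightarrow> bool" where
  "refinable lam \<longleftrightarrow> (\<exists>a\<in>missing lam. \<exists>b\<in>missing lam. a \<noteq> b \<and> a + b \<in> lam)"

definition unref :: "nat \<Rightarrow> nat set set" where
  "unref N = {lam. distinct_partition N lam \<and> \<not> refinable lam}"

definition unref_max :: "nat \<Rightarrow> nat set set" where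
  "unref_max N = {lam \<in> unref N. Max lam = Max (Max ` unref N)}"

definition unref_bar :: "nat \<Rightarrow> nat set set" where
  "unref_bar N = {lam \<in> unref_max N. card (missing lam) = Max lam div 2}"

definition T :: "nat \<Rightarrow> nat" where
  "T n = n * (n + 1) div 2"

definition Td :: "nat \<Rightarrow> nat \<Rightarrow> nat" where
  "Td n d = T n - d"

text \<open>For S with 0 in S and finite complement C = -S,
  the boundary path has, for each c in C, a north step starting at the point
  (card {s in S. s < c}, card {d in C. d < c}). Hence the row (counted from the top,
  English convention, rows 1..card C) at height card {d in C. d < c} = card C - i
  has length card {s in S. s < c}. The diagram is given as its set of cells (i, j),
  i = row from the top, j = column from the left, both 1-based.\<close>
definition KN :: "nat set \<Rightarrow> (nat \<times> nat) set" where
  "KN S = {(i, j). 1 \<le> i \<and> i \<le> card (- S) \<and> 1 \<le> j \<and>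
      (\<exists>c. c \<notin> S \<and> card {d. d \<notin> S \<and> d < c} = card (- S) - i \<and> j \<le> card {s \<in> S. s < c})}"

definition hook :: "(nat \<times> nat) set \<Rightarrow> nat \<Rightarrow> nat \<Rightarrow> nat" where
  "hook Y i j = card {j'. j < j' \<and> (i, j') \<in> Y} + card {i'. i < i' \<and> (i', j) \<in> Y} + 1"

end

theory Submission
  imports Defs
begin


lemma rk_ln:
  fixes lam :: "nat set"
  shows "card {d. d \<in> lam \<and> d < c} + card {s. s \<notin> lam \<and> s < c} = c"
proof -
  have "{..<c} = {d. d \<in> lam \<and> d < c} \<union> {s. s \<notin> lam \<and> s < c}" by auto
  moreover have "{d. d \<in> lam \<and> d < c} \<inter> {s. s \<notin> lam \<and> s < c} = {}" by auto
  moreover have "finite {d. d \<in> lam \<and> d < c}" "finite {s. s \<notin> lam \<and> s < c}" by auto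
  ultimately have "card {..<c} = card {d. d \<in> lam \<and> d < c} + card {s. s \<notin> lam \<and> s < c}"
    by (metis card_Un_disjoint)
  then show ?thesis by simp
qed

lemma hook_sym:
  fixes lam :: "nat set" and F :: nat
  assumes fin: "finite lam" and z: "0 \<notin> lam" and FF: "F \<in> lam" and le: "\<forall>x\<in>lam. x \<le> F"
    and sym: "\<forall>x\<le>F. x \<in> lam \<longleftrightarrow> F - x \<notin> lam"
    and i: "1 \<le> i" "i \<le> card lam"
  shows "hook (KN (-lam)) i 1 = hook (KN (-lam)) 1 i"
proof -
  define t where "t = card lam"
  define rk where "rk c = card {d. d \<in> lam \<and> d < c}" for c
  define ln where "ln c = card {s. s \<notin> lam \<and> s < c}" for c
  have rkln: "rk c + ln c = c" for c unfolding rk_def ln_def by (rule rk_ln)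
  have mono: "rk c < rk c'" if "c \<in> lam" "c < c'" for c c'
    unfolding rk_def using that fin by (intro psubset_card_mono) auto
  have rklt: "rk c < t" if "c \<in> lam" for c
    unfolding rk_def t_def using that fin by (intro psubset_card_mono) auto
  have uniq: "c = c'" if "c \<in> lam" "c' \<in> lam" "rk c = rk c'" for c c'
    using mono that by (metis less_irrefl linorder_neqE_nat)
  have inj: "inj_on rk lam" using uniq by (meson inj_onI)
  have surj: "\<exists>c\<in>lam. rk c = j" if "j < t" for j
  proof -
    have "rk ` lam \<subseteq> {..<t}" using rklt by auto
    moreover have "card (rk ` lam) = card {..<t}" using inj card_image t_def by simp
    ultimately have "rk ` lam = {..<t}" by (simp add: card_subset_eq)
    then have "j \<in> rk ` lam" using that by simp
    then show ?thesis by (metis imageE)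
  qed
  have Y: "(a,b) \<in> KN (-lam) \<longleftrightarrow> 1 \<le> a \<and> a \<le> t \<and> 1 \<le> b \<and> (\<exists>c\<in>lam. rk c = t - a \<and> b \<le> ln c)" for a b
    unfolding KN_def rk_def ln_def t_def by auto
  have lnpos: "1 \<le> ln c" if "c \<in> lam" for c
  proof -
    have "c > 0" using z that by (cases c) auto
    hence "0 \<in> {s. s \<notin> lam \<and> s < c}" using z by auto
    moreover have "finite {s. s \<notin> lam \<and> s < c}" by auto
    ultimately show ?thesis unfolding ln_def
      by (metis One_nat_def Suc_leI card_gt_0_iff empty_iff)
  qed
  obtain c0 where c0: "c0 \<in> lam" "rk c0 = t - i" using surj[of "t-i"] i t_def by auto
  have A1: "{j'. 1 < j' \<and> (i,j') \<in> KN(-lam)} = {1<..ln c0}"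
  proof (rule set_eqI, rule iffI)
    fix j' assume "j' \<in> {j'. 1 < j' \<and> (i,j') \<in> KN(-lam)}"
    then obtain c where c: "c \<in> lam" "rk c = t - i" "j' \<le> ln c" "1 < j'" using Y by auto
    then have "c = c0" using uniq[OF c(1) c0(1)] c(2) c0(2) by simp
    then show "j' \<in> {1<..ln c0}" using c by auto
  next
    fix j' assume "j' \<in> {1<..ln c0}"
    then show "j' \<in> {j'. 1 < j' \<and> (i,j') \<in> KN(-lam)}" using Y c0 i t_def by auto
  qed
  have A2: "{i'. i < i' \<and> (i',1) \<in> KN(-lam)} = {i<..t}"
  proof
    show "{i'. i < i' \<and> (i',1) \<in> KN(-lam)} \<subseteq> {i<..t}" using Y by auto
    show "{i<..t} \<subseteq> {i'. i < i' \<and> (i',1) \<in> KN(-lam)}"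
    proof
      fix i' assume "i' \<in> {i<..t}"
      then have "i < i'" "i' \<le> t" by auto
      then obtain c where "c \<in> lam" "rk c = t - i'" using surj[of "t - i'"] i by auto
      then show "i' \<in> {i'. i < i' \<and> (i',1) \<in> KN(-lam)}"
        using Y lnpos \<open>i < i'\<close> \<open>i' \<le> t\<close> i by auto
    qed
  qed
  have h1: "hook (KN (-lam)) i 1 = c0"
    unfolding hook_def A1 A2 using rkln[of c0] c0 lnpos[OF c0(1)] i t_def by simp
  have rkF: "rk F = t - 1"
  proof -
    have "{d. d \<in> lam \<and> d < F} = lam - {F}" using le FF by force
    then show ?thesis unfolding rk_def t_def using fin FF by simp
  qed
  have B1: "{j'. i < j' \<and> (1,j') \<in> KN(-lam)} = {i<..ln F}"
  proof (rule set_eqI, rule iffI)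
    fix j' assume "j' \<in> {j'. i < j' \<and> (1,j') \<in> KN(-lam)}"
    then obtain c where c: "c \<in> lam" "rk c = t - 1" "j' \<le> ln c" "i < j'" using Y by auto
    then have "c = F" using uniq[OF c(1) FF] c(2) rkF by simp
    then show "j' \<in> {i<..ln F}" using c by auto
  next
    fix j' assume "j' \<in> {i<..ln F}"
    then show "j' \<in> {j'. i < j' \<and> (1,j') \<in> KN(-lam)}" using Y rkF FF i t_def by auto
  qed
  have SC: "ln x = card {d \<in> lam. F - x < d}" if "x \<le> F" for x
  proof -
    have "bij_betw (\<lambda>s. F - s) {s. s \<notin> lam \<and> s < x} {d \<in> lam. F - x < d}"
    proof (rule bij_betw_imageI)
      show "inj_on (\<lambda>s. F - s) {s. s \<notin> lam \<and> s < x}" using that by (auto simp: inj_on_def)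
      show "(\<lambda>s. F - s) ` {s. s \<notin> lam \<and> s < x} = {d \<in> lam. F - x < d}"
      proof
        show "(\<lambda>s. F - s) ` {s. s \<notin> lam \<and> s < x} \<subseteq> {d \<in> lam. F - x < d}"
        proof
          fix y assume "y \<in> (\<lambda>s. F - s) ` {s. s \<notin> lam \<and> s < x}"
          then obtain s where s: "s \<notin> lam" "s < x" "y = F - s" by auto
          have "s \<le> F" using s that by auto
          then have "F - s \<in> lam" using sym s(1) by blast
          then show "y \<in> {d \<in> lam. F - x < d}" using s that by auto
        qed
        show "{d \<in> lam. F - x < d} \<subseteq> (\<lambda>s. F - s) ` {s. s \<notin> lam \<and> s < x}"
        proof
          fix d assume d: "d \<in> {d \<in> lam. F - x < d}"
          then have "d \<le> F" using le by auto
          then have "F - d \<notin> lam" using sym d by (metis (no_types, lifting) diff_diff_cancel diff_le_self mem_Collect_eq)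
          moreover have "F - d < x" using d \<open>d \<le> F\<close> that by auto
          moreover have "d = F - (F - d)" using \<open>d \<le> F\<close> by auto
          ultimately show "d \<in> (\<lambda>s. F - s) ` {s. s \<notin> lam \<and> s < x}" by blast
        qed
      qed
    qed
    then show ?thesis unfolding ln_def by (rule bij_betw_same_card)
  qed
  have lnF: "ln F = t"
  proof -
    have "{d \<in> lam. F - F < d} = lam" using z by (auto intro: Nat.gr0I)
    then show ?thesis using SC[of F] t_def by simp
  qed
  define G where "G y = card {d \<in> lam. y \<le> d}" for y
  have Gc0: "G c0 = i"
  proof -
    have "lam = {d. d \<in> lam \<and> d < c0} \<union> {d \<in> lam. c0 \<le> d}" by auto
    moreover have "{d. d \<in> lam \<and> d < c0} \<inter> {d \<in> lam. c0 \<le> d} = {}" by auto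
    ultimately have "t = rk c0 + G c0" unfolding t_def rk_def G_def using fin
      by (metis (no_types, lifting) card_Un_disjoint finite_Un)
    then show ?thesis using c0 i t_def by simp
  qed
  have Gle: "G c0 \<le> G y \<longleftrightarrow> y \<le> c0" for y
  proof
    assume "y \<le> c0"
    then show "G c0 \<le> G y" unfolding G_def using fin by (intro card_mono) auto
  next
    assume "G c0 \<le> G y"
    show "y \<le> c0"
    proof (rule ccontr)
      assume "\<not> y \<le> c0"
      then have "{d \<in> lam. y \<le> d} \<subset> {d \<in> lam. c0 \<le> d}" using c0 by auto
      then have "G y < G c0" unfolding G_def using fin by (intro psubset_card_mono) auto
      then show False using \<open>G c0 \<le> G y\<close> by simp
    qed
  qed
  have cond: "i \<le> ln c \<longleftrightarrow> F - c0 < c" if "c \<in> lam" for c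
  proof -
    have "c \<le> F" using le that by auto
    have "{d \<in> lam. F - c < d} = {d \<in> lam. F - c + 1 \<le> d}" by auto
    then have "ln c = G (F - c + 1)" using SC[OF \<open>c \<le> F\<close>] G_def by simp
    then have "i \<le> ln c \<longleftrightarrow> F - c + 1 \<le> c0" using Gle Gc0 by simp
    also have "\<dots> \<longleftrightarrow> F - c0 < c" using \<open>c \<le> F\<close> c0 le by auto
    finally show ?thesis .
  qed
  define C where "C = {c \<in> lam. F - c0 < c \<and> c < F}"
  have B2: "{i'. 1 < i' \<and> (i',i) \<in> KN(-lam)} = (\<lambda>c. t - rk c) ` C"
  proof
    show "{i'. 1 < i' \<and> (i',i) \<in> KN(-lam)} \<subseteq> (\<lambda>c. t - rk c) ` C"
    proof
      fix i' assume "i' \<in> {i'. 1 < i' \<and> (i',i) \<in> KN(-lam)}"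
      then obtain c where c: "1 < i'" "i' \<le> t" "c \<in> lam" "rk c = t - i'" "i \<le> ln c"
        using Y by auto
      have "c \<noteq> F" using c rkF by auto
      then have "c < F" using le c by force
      moreover have "F - c0 < c" using cond c by auto
      ultimately have "c \<in> C" using c C_def by auto
      moreover have "i' = t - rk c" using c by auto
      ultimately show "i' \<in> (\<lambda>c. t - rk c) ` C" by blast
    qed
    show "(\<lambda>c. t - rk c) ` C \<subseteq> {i'. 1 < i' \<and> (i',i) \<in> KN(-lam)}"
    proof
      fix i' assume "i' \<in> (\<lambda>c. t - rk c) ` C"
      then obtain c where c: "c \<in> C" "i' = t - rk c" by auto
      then have cl: "c \<in> lam" "F - c0 < c" "c < F" using C_def by auto
      have "rk c < t - 1" using mono[OF cl(1) cl(3)] rkF by simp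
      then have "1 < i'" "i' \<le> t" "rk c = t - i'" using c by auto
      moreover have "i \<le> ln c" using cond cl by auto
      ultimately show "i' \<in> {i'. 1 < i' \<and> (i',i) \<in> KN(-lam)}" using Y cl i by auto
    qed
  qed
  have injC: "inj_on (\<lambda>c. t - rk c) C"
  proof (rule inj_onI)
    fix a b assume "a \<in> C" "b \<in> C" "t - rk a = t - rk b"
    then have "a \<in> lam" "b \<in> lam" using C_def by auto
    then have "rk a = rk b" using rklt \<open>t - rk a = t - rk b\<close> by (metis diff_diff_cancel less_imp_le)
    then show "a = b" using uniq[OF \<open>a \<in> lam\<close> \<open>b \<in> lam\<close>] by simp
  qed
  have cardC: "card C + 1 = ln c0"
  proof -
    have "c0 \<le> F" using le c0 by auto
    have "c0 > 0" using z c0 by (cases c0) auto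
    have "{d \<in> lam. F - c0 < d} = insert F C" using C_def FF le \<open>c0 > 0\<close> \<open>c0 \<le> F\<close> by force
    moreover have "F \<notin> C" using C_def by auto
    moreover have "finite C" using C_def fin by auto
    ultimately show ?thesis using SC[OF \<open>c0 \<le> F\<close>] by simp
  qed
  have h2: "hook (KN (-lam)) 1 i = c0"
    unfolding hook_def B1 B2 card_image[OF injC] using cardC lnF rkln[of c0] c0 i t_def by simp
  show ?thesis using h1 h2 by simp
qed



lemma struct_pairs:
  fixes lam :: "nat set"
  assumes fin: "finite lam" and z: "0 \<notin> lam" and ne: "lam \<noteq> {}"
    and nr: "\<not> refinable lam" and cm: "card (missing lam) = Max lam div 2"
  shows "card lam = Max lam - Max lam div 2"
    and "\<And>a. 1 \<le> a \<Longrightarrow> 2 * a < Max lam \<Longrightarrow> (a \<in> lam \<longleftrightarrow> Max lam - a \<notin> lam)"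
    and "even (Max lam) \<Longrightarrow> Max lam div 2 \<notin> lam"
proof -
  define F where "F = Max lam"
  have FF: "F \<in> lam" using fin ne F_def by simp
  have le: "x \<le> F" if "x \<in> lam" for x using fin that F_def by simp
  have sub: "lam \<subseteq> {1..F}" using le z by (auto, metis Suc_leI gr0I)
  have "card (missing lam) = F - card lam"
    unfolding missing_def F_def[symmetric] using card_Diff_subset[OF fin sub] by simp
  then have t: "card lam = F - F div 2" using cm F_def
    by (metis card_atLeastAtMost card_mono diff_Suc_1 diff_diff_cancel finite_atLeastAtMost sub)
  then show "card lam = Max lam - Max lam div 2" using F_def by simp
  have one: "a \<in> lam \<or> F - a \<in> lam" if "1 \<le> a" "2 * a < F" for a
  proof (rule ccontr)
    assume "\<not> (a \<in> lam \<or> F - a \<in> lam)"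
    then have "a \<in> missing lam" "F - a \<in> missing lam" unfolding missing_def F_def[symmetric]
      using that by auto
    moreover have "a \<noteq> F - a" "a + (F - a) \<in> lam" using that FF by auto
    ultimately have "refinable lam" unfolding refinable_def by blast
    then show False using nr by simp
  qed
  define L where "L = {a. 1 \<le> a \<and> 2 * a < F}"
  define phi where "phi a = (if a \<in> lam then a else F - a)" for a
  have Leq: "L = {1..(F - 1) div 2}" unfolding L_def by auto
  have cardL: "card L = (F - 1) div 2" using Leq by simp
  have img: "phi ` L \<subseteq> lam - {F}"
  proof
    fix y assume "y \<in> phi ` L"
    then obtain a where a: "a \<in> L" "y = phi a" by auto
    show "y \<in> lam - {F}"
    proof (cases "a \<in> lam")
      case True then show ?thesis using a L_def phi_def by auto
    next
      case False then show ?thesis using a L_def phi_def one[of a] by auto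
    qed
  qed
  have inj: "inj_on phi L"
    unfolding inj_on_def L_def phi_def by auto
  have cover: "lam - {F} \<subseteq> phi ` L"
  proof (rule ccontr)
    assume "\<not> lam - {F} \<subseteq> phi ` L"
    then have "phi ` L \<subset> lam - {F}" using img by auto
    then have "card (phi ` L) < card (lam - {F})" using fin by (intro psubset_card_mono) auto
    then have "card L < card lam - 1" using card_image[OF inj] fin FF by simp
    then show False using cardL t by linarith
  qed
  show "a \<in> lam \<longleftrightarrow> Max lam - a \<notin> lam" if "1 \<le> a" "2 * a < Max lam" for a
  proof
    assume al: "a \<in> lam"
    show "Max lam - a \<notin> lam"
    proof
      assume "Max lam - a \<in> lam"
      then have "F - a \<in> lam - {F}" using that F_def by auto
      then obtain b where b: "b \<in> L" "F - a = phi b" using cover by auto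
      show False
      proof (cases "b \<in> lam")
        case True then show ?thesis using b L_def phi_def that F_def by auto
      next
        case False
        then have "F - a = F - b" using b phi_def by auto
        moreover have "a < F" "b < F" using that b L_def F_def by auto
        ultimately have "a = b" by arith
        then show ?thesis using False al by simp
      qed
    qed
  next
    assume "Max lam - a \<notin> lam"
    then show "a \<in> lam" using one[of a] that F_def by auto
  qed
  show "Max lam div 2 \<notin> lam" if "even (Max lam)"
  proof
    assume "Max lam div 2 \<in> lam"
    moreover have "Max lam div 2 \<noteq> F" using FF z F_def by (metis div_less_dividend gr0I less_irrefl one_less_numeral_iff semiring_norm(76))
    ultimately have "F div 2 \<in> lam - {F}" using F_def by auto
    then obtain b where b: "b \<in> L" "F div 2 = phi b" using cover by auto
    then show False using L_def phi_def that F_def by (auto split: if_splits)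
  qed
qed



lemma two_sum: "2 * \<Sum>{1..m::nat} = m * (m + 1)"
  by (induction m) (auto simp: algebra_simps)

lemma twoT: "2 * T n = n * (n + 1)"
  unfolding T_def by simp

lemma TT_lem:
  fixes n k :: nat
  assumes "1 \<le> k" "2 * k + 4 \<le> n"
  shows "2 * Td n (n - 2 * k) + 2 * n = n * (n + 1) + 4 * k"
proof -
  have "n * 2 \<le> n * (n + 1)" using assms by (intro mult_le_mono2) auto
  then have "n \<le> T n" using twoT[of n] by linarith
  then show ?thesis unfolding Td_def using twoT[of n] assms by linarith
qed

lemma unref_intro:
  assumes "finite W" "0 \<notin> W" "\<Sum>W = N" "x \<in> W" "y \<in> W" "x \<noteq> y"
    and "\<And>a b. a \<notin> W \<Longrightarrow> b \<notin> W \<Longrightarrow> 0 < a \<Longrightarrow> 0 < b \<Longrightarrow> a \<noteq> b \<Longrightarrow> a + b \<notin> W"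
  shows "W \<in> unref N"
proof -
  have "card {x, y} \<le> card W" using assms by (intro card_mono) auto
  then have "2 \<le> card W" using assms by simp
  moreover have "\<not> refinable W"
    unfolding refinable_def missing_def using assms(7) by fastforce
  ultimately show ?thesis unfolding unref_def distinct_partition_def using assms by auto
qed

lemma caseb_arith: fixes a c k :: nat assumes 
  A: "a = k + 2 \<or> a = 2 * k \<or> (2 * k + 1 < a \<and> a \<noteq> 2 * k + 3 \<and> a \<noteq> 3 * k + 1 \<and> a \<noteq> 4 * k + 3)"
  and B: "c = k + 2 \<or> c = 2 * k \<or> (2 * k + 1 < c \<and> c \<noteq> 2 * k + 3 \<and> c \<noteq> 3 * k + 1 \<and> c \<noteq> 4 * k + 3)"
  and C: "(1 \<le> a + c \<and> a + c \<le> 2 * k + 1 \<and> a + c \<noteq> 2 * k \<and> a + c \<noteq> k + 2) \<or> a + c = 2 * k + 3 \<or> a + c = 3 * k + 1 \<or> a + c = 4 * k + 3"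
  and "a \<noteq> c" "3 \<le> k"
  shows False
proof -
  have C': "a + c \<le> 2 * k + 1 \<or> a + c = 2 * k + 3 \<or> a + c = 3 * k + 1 \<or> a + c = 4 * k + 3" using C by auto
  from A show False
  proof (elim disjE conjE)
    assume a: "a = k + 2"
    from B show False
    proof (elim disjE conjE)
      assume "c = k + 2" then show False using a \<open>a \<noteq> c\<close> by simp
    next
      assume "c = 2 * k" then show False using a C' \<open>3 \<le> k\<close> by linarith
    next
      assume "2 * k + 1 < c" "c \<noteq> 2 * k + 3" "c \<noteq> 3 * k + 1" "c \<noteq> 4 * k + 3"
      then show False using a C' by auto
    qed
  next
    assume a: "a = 2 * k"
    from B show False
    proof (elim disjE conjE)
      assume "c = k + 2" then show False using a C' \<open>3 \<le> k\<close> by linarith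
    next
      assume "c = 2 * k" then show False using a \<open>a \<noteq> c\<close> by simp
    next
      assume "2 * k + 1 < c" "c \<noteq> 2 * k + 3" "c \<noteq> 3 * k + 1" "c \<noteq> 4 * k + 3"
      then show False using a C' by auto
    qed
  next
    assume a: "2 * k + 1 < a" "a \<noteq> 2 * k + 3" "a \<noteq> 3 * k + 1" "a \<noteq> 4 * k + 3"
    from B show False
    proof (elim disjE conjE)
      assume "c = k + 2" then show False using a C' by auto
    next
      assume "c = 2 * k" then show False using a C' by auto
    next
      assume c: "2 * k + 1 < c" "c \<noteq> 2 * k + 3" "c \<noteq> 3 * k + 1" "c \<noteq> 4 * k + 3"
      have "a \<ge> 2 * k + 2" "c \<ge> 2 * k + 2" using a c by auto
      moreover have "a = 2 * k + 2 \<or> a \<ge> 2 * k + 4" "c = 2 * k + 2 \<or> c \<ge> 2 * k + 4" using a c by auto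
      ultimately have "a + c \<ge> 4 * k + 6" using \<open>a \<noteq> c\<close> by auto
      then show False using C' by auto
    qed
  qed
qed

lemma witness:
  fixes n k :: nat
  assumes "1 \<le> k" "2 * k + 4 \<le> n"
  shows "\<exists>W \<in> unref (Td n (n - 2 * k)). 2 * n - 5 \<in> W"
proof -
  have TT: "2 * Td n (n - 2 * k) + 2 * n = n * (n + 1) + 4 * k"
  proof -
    have "n * 2 \<le> n * (n + 1)" using assms by (intro mult_le_mono2) auto
    then have "n \<le> T n" using twoT[of n] by linarith
    then show ?thesis unfolding Td_def using twoT[of n] assms by linarith
  qed
  consider (a) "2 * k + 5 \<le> n" | (b) "n = 2 * k + 4" "3 \<le> k" | (c1) "k = 1" "n = 6" | (c2) "k = 2" "n = 8"
  proof -
    have "2 * k + 5 \<le> n \<or> (n = 2 * k + 4 \<and> 3 \<le> k) \<or> (k = 1 \<and> n = 6) \<or> (k = 2 \<and> n = 8)"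
      using assms by arith
    then show thesis using that by blast
  qed
  then show ?thesis
  proof cases
    case a
    then obtain p where np: "n = 2 * k + 5 + p" using le_Suc_ex by blast
    define m where "m = 2 * k + 1 + p"
    define W where "W = ({1..m} - {k + 2 + p}) \<union> {2 * k + 3 + p, 3 * k + 3 + p, 4 * k + 5 + 2 * p}"
    have memW: "x \<in> W \<longleftrightarrow> (1 \<le> x \<and> x \<le> 2 * k + 1 + p \<and> x \<noteq> k + 2 + p) \<or> x = 2 * k + 3 + p \<or> x = 3 * k + 3 + p \<or> x = 4 * k + 5 + 2 * p" for x
      unfolding W_def m_def by auto
    have sumW: "\<Sum>W = (\<Sum>{1..m} - (k + 2 + p)) + ((2 * k + 3 + p) + (3 * k + 3 + p) + (4 * k + 5 + 2 * p))"
    proof -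
      have d: "({1..m} - {k + 2 + p}) \<inter> {2 * k + 3 + p, 3 * k + 3 + p, 4 * k + 5 + 2 * p} = {}"
        unfolding m_def by auto
      have "\<Sum>W = \<Sum>({1..m} - {k + 2 + p}) + \<Sum>{2 * k + 3 + p, 3 * k + 3 + p, 4 * k + 5 + 2 * p}"
        unfolding W_def by (rule sum.union_disjoint) (auto simp: d m_def)
      moreover have "\<Sum>({1..m} - {k + 2 + p}) = \<Sum>{1..m} - (k + 2 + p)"
        using assms by (subst sum_diff1_nat) (auto simp: m_def)
      moreover have "\<Sum>{2 * k + 3 + p, 3 * k + 3 + p, 4 * k + 5 + 2 * p} = (2 * k + 3 + p) + (3 * k + 3 + p) + (4 * k + 5 + 2 * p)"
        using assms by simp
      ultimately show ?thesis by simp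
    qed
    have big: "k + 2 + p \<le> \<Sum>{1..m}"
    proof -
      have "m * 2 \<le> m * (m + 1)" using assms m_def by (intro mult_le_mono2) auto
      then show ?thesis using two_sum[of m] m_def assms by linarith
    qed
    have nn: "n * (n + 1) = m * (m + 1) + 8 * m + 20" unfolding np m_def by (simp add: algebra_simps)
    have "\<Sum>W = Td n (n - 2 * k)"
      using TT sumW big nn two_sum[of m] np m_def by linarith
    moreover have "W \<in> unref (\<Sum>W)"
    proof (rule unref_intro[of W _ "2 * k + 3 + p" "4 * k + 5 + 2 * p"])
      show "finite W" unfolding W_def by auto
      show "0 \<notin> W" using memW by auto
      show "2 * k + 3 + p \<in> W" "4 * k + 5 + 2 * p \<in> W" using memW by auto
      show "2 * k + 3 + p \<noteq> 4 * k + 5 + 2 * p" by simp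
      fix a b assume na: "a \<notin> W" and nb: "b \<notin> W" and "0 < a" "0 < b" "a \<noteq> b"
      have A: "a = k + 2 + p \<or> (2 * k + 1 + p < a \<and> a \<noteq> 2 * k + 3 + p \<and> a \<noteq> 3 * k + 3 + p \<and> a \<noteq> 4 * k + 5 + 2 * p)"
        using na \<open>0 < a\<close> unfolding memW by auto
      have B: "b = k + 2 + p \<or> (2 * k + 1 + p < b \<and> b \<noteq> 2 * k + 3 + p \<and> b \<noteq> 3 * k + 3 + p \<and> b \<noteq> 4 * k + 5 + 2 * p)"
        using nb \<open>0 < b\<close> unfolding memW by auto
      show "a + b \<notin> W"
      proof
        assume "a + b \<in> W"
        then have C: "(1 \<le> a + b \<and> a + b \<le> 2 * k + 1 + p \<and> a + b \<noteq> k + 2 + p) \<or> a + b = 2 * k + 3 + p \<or> a + b = 3 * k + 3 + p \<or> a + b = 4 * k + 5 + 2 * p"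
          unfolding memW .
        from A B C \<open>a \<noteq> b\<close> assms show False by (elim disjE conjE; linarith)
      qed
    qed simp
    moreover have "2 * n - 5 \<in> W" using memW np by auto
    ultimately show ?thesis by auto
  next
    case b
    define m where "m = 2 * k + 1"
    define W where "W = ({1..m} - {2 * k} - {k + 2}) \<union> {2 * k + 3, 3 * k + 1, 4 * k + 3}"
    have memW: "x \<in> W \<longleftrightarrow> (1 \<le> x \<and> x \<le> 2 * k + 1 \<and> x \<noteq> 2 * k \<and> x \<noteq> k + 2) \<or> x = 2 * k + 3 \<or> x = 3 * k + 1 \<or> x = 4 * k + 3" for x
      unfolding W_def m_def by auto
    have sumW: "\<Sum>W = (\<Sum>{1..m} - 2 * k - (k + 2)) + ((2 * k + 3) + (3 * k + 1) + (4 * k + 3))"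
    proof -
      have d: "({1..m} - {2 * k} - {k + 2}) \<inter> {2 * k + 3, 3 * k + 1, 4 * k + 3} = {}"
        using b unfolding m_def by auto
      have "\<Sum>W = \<Sum>({1..m} - {2 * k} - {k + 2}) + \<Sum>{2 * k + 3, 3 * k + 1, 4 * k + 3}"
        unfolding W_def by (rule sum.union_disjoint) (use b in \<open>auto simp: d m_def\<close>)
      moreover have "\<Sum>({1..m} - {2 * k} - {k + 2}) = \<Sum>{1..m} - 2 * k - (k + 2)"
        using b by (simp add: sum_diff1_nat m_def)
      moreover have "\<Sum>{2 * k + 3, 3 * k + 1, 4 * k + 3} = (2 * k + 3) + (3 * k + 1) + (4 * k + 3)"
        using b by simp
      ultimately show ?thesis by simp
    qed
    have big: "2 * k + (k + 2) \<le> \<Sum>{1..m}"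
    proof -
      have "m * 7 \<le> m * (m + 1)" using b m_def by (intro mult_le_mono2) auto
      then show ?thesis using two_sum[of m] m_def assms by linarith
    qed
    have nn: "n * (n + 1) = m * (m + 1) + 6 * m + 12" unfolding b m_def by (simp add: algebra_simps)
    have "\<Sum>W = Td n (n - 2 * k)"
      using TT sumW big nn two_sum[of m] b m_def by linarith
    moreover have "W \<in> unref (\<Sum>W)"
    proof (rule unref_intro[of W _ "2 * k + 3" "4 * k + 3"])
      show "finite W" unfolding W_def by auto
      show "0 \<notin> W" using memW by auto
      show "2 * k + 3 \<in> W" "4 * k + 3 \<in> W" using memW by auto
      show "2 * k + 3 \<noteq> 4 * k + 3" using b by simp
      fix a c assume na: "a \<notin> W" and nc: "c \<notin> W" and "0 < a" "0 < c" "a \<noteq> c"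
      have A: "a = k + 2 \<or> a = 2 * k \<or> (2 * k + 1 < a \<and> a \<noteq> 2 * k + 3 \<and> a \<noteq> 3 * k + 1 \<and> a \<noteq> 4 * k + 3)"
        using na \<open>0 < a\<close> unfolding memW by auto
      have B: "c = k + 2 \<or> c = 2 * k \<or> (2 * k + 1 < c \<and> c \<noteq> 2 * k + 3 \<and> c \<noteq> 3 * k + 1 \<and> c \<noteq> 4 * k + 3)"
        using nc \<open>0 < c\<close> unfolding memW by auto
      show "a + c \<notin> W"
      proof
        assume "a + c \<in> W"
        then have C: "(1 \<le> a + c \<and> a + c \<le> 2 * k + 1 \<and> a + c \<noteq> 2 * k \<and> a + c \<noteq> k + 2) \<or> a + c = 2 * k + 3 \<or> a + c = 3 * k + 1 \<or> a + c = 4 * k + 3"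
          unfolding memW .
        from caseb_arith[OF A B C \<open>a \<noteq> c\<close>] b show False by simp
      qed
    qed simp
    moreover have "2 * n - 5 \<in> W" using memW b by auto
    ultimately show ?thesis by auto
  next
    case c1
    define W :: "nat set" where "W = {1,2,3,4,7}"
    have "W \<in> unref 17"
    proof (rule unref_intro[of W _ 1 7])
      fix a c assume "a \<notin> W" "c \<notin> W" "0 < a" "0 < c" "a \<noteq> c"
      have lo: "5 \<le> x" if "x \<notin> W" "0 < x" for x
      proof (rule ccontr)
        assume "\<not> 5 \<le> x"
        then have "x \<in> {1,2,3,4,7}" using that by (auto simp: less_Suc_eq numeral_eq_Suc)
        then show False using that W_def by auto
      qed
      then have "5 \<le> a" "5 \<le> c" using \<open>a \<notin> W\<close> \<open>c \<notin> W\<close> \<open>0 < a\<close> \<open>0 < c\<close> by auto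
      moreover have "x \<in> W \<Longrightarrow> x \<le> 7" for x unfolding W_def by auto
      ultimately show "a + c \<notin> W" by fastforce
    qed (auto simp: W_def)
    moreover have "Td n (n - 2 * k) = 17" using c1 by (simp add: Td_def T_def)
    ultimately show ?thesis using c1 W_def by auto
  next
    case c2
    define W :: "nat set" where "W = {1,2,3,4,5,6,11}"
    have "W \<in> unref 32"
    proof (rule unref_intro[of W _ 1 11])
      fix a c assume "a \<notin> W" "c \<notin> W" "0 < a" "0 < c" "a \<noteq> c"
      have lo: "7 \<le> x" if "x \<notin> W" "0 < x" for x
      proof (rule ccontr)
        assume "\<not> 7 \<le> x"
        then have "x \<in> {1,2,3,4,5,6,11}" using that by (auto simp: less_Suc_eq numeral_eq_Suc)
        then show False using that W_def by auto
      qed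
      then have "7 \<le> a" "7 \<le> c" using \<open>a \<notin> W\<close> \<open>c \<notin> W\<close> \<open>0 < a\<close> \<open>0 < c\<close> by auto
      moreover have "x \<in> W \<Longrightarrow> x \<le> 11" for x unfolding W_def by auto
      ultimately show "a + c \<notin> W" by fastforce
    qed (auto simp: W_def)
    moreover have "Td n (n - 2 * k) = 32" using c2 by (simp add: Td_def T_def)
    ultimately show ?thesis using c2 W_def by auto
  qed
qed



lemma two_sum_lt: "2 * \<Sum>{1..<h::nat} + h = h * h"
  by (induction h) (auto simp: algebra_simps atLeastLessThanSuc)

lemma even_sum:
  fixes lam :: "nat set" and h :: nat
  assumes fin: "finite lam" and z: "0 \<notin> lam" and FF: "2 * h \<in> lam"
    and le: "\<forall>x\<in>lam. x \<le> 2 * h" and h1: "1 \<le> h"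
    and pr: "\<And>a. 1 \<le> a \<Longrightarrow> a < h \<Longrightarrow> (a \<in> lam \<longleftrightarrow> 2 * h - a \<notin> lam)"
    and hn: "h \<notin> lam"
  shows "\<exists>E. 2 * \<Sum>lam = h * h + 3 * h + 4 * E"
proof -
  define A where "A = lam \<inter> {1..<h}"
  define B where "B = {1..<h} - lam"
  define I where "I = (\<lambda>b. 2 * h - b) ` B"
  have lamEq: "lam = A \<union> I \<union> {2 * h}"
  proof
    show "lam \<subseteq> A \<union> I \<union> {2 * h}"
    proof
      fix x assume x: "x \<in> lam"
      have "x \<noteq> 0" using x z by metis
      have "x \<noteq> h" "x \<le> 2 * h" using x hn le by auto
      consider "x < h" | "h < x" "x < 2 * h" | "x = 2 * h" using \<open>x \<noteq> h\<close> \<open>x \<le> 2 * h\<close> by linarith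
      then show "x \<in> A \<union> I \<union> {2 * h}"
      proof cases
        case 1 then show ?thesis using x \<open>x \<noteq> 0\<close> A_def by auto
      next
        case 2
        define a where "a = 2 * h - x"
        have a: "1 \<le> a" "a < h" "2 * h - a = x" using 2 a_def by auto
        then have "a \<notin> lam" using pr[OF a(1) a(2)] x by simp
        then have "a \<in> B" using a B_def by auto
        then show ?thesis using a(3) I_def by auto
      next
        case 3 then show ?thesis by simp
      qed
    qed
    show "A \<union> I \<union> {2 * h} \<subseteq> lam"
    proof -
      have "I \<subseteq> lam"
      proof
        fix y assume "y \<in> I"
        then obtain b where b: "b \<in> B" "y = 2 * h - b" using I_def by auto
        then show "y \<in> lam" using pr[of b] B_def by auto
      qed
      then show ?thesis using A_def FF by auto
    qed
  qed
  have finB: "finite B" "finite A" using A_def B_def by auto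
  have injI: "inj_on (\<lambda>b. 2 * h - b) B" unfolding inj_on_def B_def by auto
  have d1: "A \<inter> I = {}" unfolding A_def I_def B_def by auto
  have d2: "(A \<union> I) \<inter> {2 * h} = {}" unfolding A_def I_def B_def using h1 by auto
  have s1: "\<Sum>lam = \<Sum>A + \<Sum>I + 2 * h"
  proof -
    have "\<Sum>lam = \<Sum>(A \<union> I) + \<Sum>{2 * h}"
      unfolding lamEq by (rule sum.union_disjoint) (use finB I_def d2 in auto)
    moreover have "\<Sum>(A \<union> I) = \<Sum>A + \<Sum>I"
      by (rule sum.union_disjoint) (use finB I_def d1 in auto)
    ultimately show ?thesis by simp
  qed
  have s2: "\<Sum>I + \<Sum>B = 2 * h * card B"
  proof -
    have "\<Sum>I = (\<Sum>b\<in>B. 2 * h - b)" unfolding I_def using sum.reindex[OF injI] by simp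
    then have "\<Sum>I + \<Sum>B = (\<Sum>b\<in>B. (2 * h - b) + b)" by (simp add: sum.distrib)
    also have "\<dots> = (\<Sum>b\<in>B. 2 * h)" using B_def by (intro sum.cong) auto
    finally show ?thesis by simp
  qed
  have s3: "\<Sum>A + \<Sum>B = \<Sum>{1..<h}"
  proof -
    have "{1..<h} = A \<union> B" "A \<inter> B = {}" unfolding A_def B_def by auto
    then show ?thesis using finB by (metis sum.union_disjoint)
  qed
  have s4: "\<Sum>B \<le> card B * h"
    using sum_bounded_above[of B "\<lambda>x. x" h] B_def by auto
  then obtain E where E: "card B * h = \<Sum>B + E" using le_Suc_ex by blast
  have "2 * \<Sum>lam = h * h + 3 * h + 4 * E"
    using s1 s2 s3 E two_sum_lt[of h] by (simp add: algebra_simps) linarith?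
  then show ?thesis by blast
qed

theorem lemma4p3:
  fixes n k :: nat and lam :: "nat set"
  assumes "2 \<le> 2 * k" and "2 * k + 4 \<le> n"
    and "lam \<in> unref_bar (Td n (n - 2 * k))"
  shows "\<forall>i \<in> {1..n - 2}. hook (KN (- lam)) i 1 = hook (KN (- lam)) 1 i"
proof -
  define N where "N = Td n (n - 2 * k)"
  define F where "F = Max lam"
  have k1: "1 \<le> k" using assms(1) by simp
  have lu: "lam \<in> unref N" and FM: "F = Max (Max ` unref N)" and cm: "card (missing lam) = F div 2"
    using assms(3) unfolding unref_bar_def unref_max_def N_def F_def by auto
  have fin: "finite lam" and z: "0 \<notin> lam" and sl: "\<Sum>lam = N" and c2: "2 \<le> card lam"
    and nr: "\<not> refinable lam"
    using lu unfolding unref_def distinct_partition_def by auto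
  have ne: "lam \<noteq> {}" using c2 by auto
  have FF: "F \<in> lam" using fin ne F_def by simp
  have le: "\<forall>x\<in>lam. x \<le> F" using fin F_def by simp
  have finU: "finite (unref N)"
  proof (rule finite_subset)
    show "unref N \<subseteq> Pow {..N}"
    proof
      fix mu assume "mu \<in> unref N"
      then have "finite mu" "\<Sum>mu = N" unfolding unref_def distinct_partition_def by auto
      then have "x \<le> N" if "x \<in> mu" for x using that
        by (metis le_add1 sum.remove)
      then show "mu \<in> Pow {..N}" by auto
    qed
  qed auto
  obtain W where W: "W \<in> unref N" "2 * n - 5 \<in> W" using witness[OF k1 assms(2)] N_def by auto
  have "finite W" using W unfolding unref_def distinct_partition_def by auto
  then have "2 * n - 5 \<le> Max W" using W by simp
  also have "Max W \<le> F" unfolding FM using W finU by (intro Max_ge) auto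
  finally have Fge: "2 * n - 5 \<le> F" .
  have t: "card lam = F - F div 2"
    and pr: "\<And>a. 1 \<le> a \<Longrightarrow> 2 * a < F \<Longrightarrow> (a \<in> lam \<longleftrightarrow> F - a \<notin> lam)"
    and ev: "even F \<Longrightarrow> F div 2 \<notin> lam"
    using struct_pairs[OF fin z ne nr cm[unfolded F_def]] F_def by auto
  have TT: "2 * N + 2 * n = n * (n + 1) + 4 * k" using TT_lem[OF k1 assms(2)] N_def by simp
  show ?thesis
  proof (cases "even F")
    case True
    define h where "h = F div 2"
    have Fh: "F = 2 * h" using True h_def by simp
    have "F > 0" using FF z by (metis gr0I)
    then have h1: "1 \<le> h" using Fh by simp
    obtain E where E: "2 * \<Sum>lam = h * h + 3 * h + 4 * E"
    proof (rule exE[OF even_sum[OF fin z, of h]])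
      show "2 * h \<in> lam" using FF Fh by simp
      show "\<forall>x\<in>lam. x \<le> 2 * h" using le Fh by simp
      show "1 \<le> h" by (rule h1)
      show "h \<notin> lam" using ev True h_def by simp
      show "1 \<le> a \<Longrightarrow> a < h \<Longrightarrow> (a \<in> lam \<longleftrightarrow> 2 * h - a \<notin> lam)" for a
        using pr[of a] Fh by simp
    qed
    have hge: "n - 2 \<le> h" using Fge Fh assms(2) by linarith
    show ?thesis
    proof (cases "h = n - 2")
      case True
      have nh: "n = h + 2" using True assms(2) by simp
      have "n * (n + 1) = h * h + 5 * h + 6" unfolding nh by (simp add: algebra_simps)
      then have "4 * E = 4 * k + 2" using E TT sl nh by linarith
      then have False by presburger
      then show ?thesis by simp
    next
      case False
      then have hm: "n - 1 \<le> h" using hge by linarith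
      define m where "m = n - 1"
      have nm: "n = m + 1" using assms(2) m_def by simp
      have "m * m \<le> h * h" using hm m_def by (intro mult_le_mono) auto
      moreover have "n * (n + 1) = m * m + 3 * m + 2" unfolding nm by (simp add: algebra_simps)
      ultimately have False using E TT sl hm m_def nm assms(2) by linarith
      then show ?thesis by simp
    qed
  next
    case False
    have sym: "\<forall>x\<le>F. x \<in> lam \<longleftrightarrow> F - x \<notin> lam"
    proof (intro allI impI)
      fix x assume x: "x \<le> F"
      consider "x = 0" | "x = F" | "1 \<le> x" "2 * x < F" | "1 \<le> F - x" "2 * (F - x) < F"
      proof -
        have "2 * x \<noteq> F" using False by auto
        then show thesis using that x by (cases "x = 0"; cases "x = F"; cases "2 * x < F") auto
      qed
      then show "x \<in> lam \<longleftrightarrow> F - x \<notin> lam"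
      proof cases
        case 1 then show ?thesis using z FF by simp
      next
        case 2 then show ?thesis using z FF by simp
      next
        case 3 then show ?thesis using pr by simp
      next
        case 4
        have "F - (F - x) = x" using x by simp
        then show ?thesis using pr[OF 4] by auto
      qed
    qed
    show ?thesis
    proof
      fix i assume "i \<in> {1..n - 2}"
      then have i: "1 \<le> i" "i \<le> card lam" using t Fge by auto
      show "hook (KN (- lam)) i 1 = hook (KN (- lam)) 1 i"
        by (rule hook_sym[OF fin z FF le sym i])
    qed
  qed
qed


end
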